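(* Let $0<a<1$ and let $\tau_1,\tau_2:[0,a]\to[0,1]$ be continuously differentiable, strictly increasing maps with $\tau_i(0)=0$, $\tau_i(a)=1$, $\tau_1(x)\le x/a$ and $\tau_2(x)\ge x/a$, such that $\tau_{21}=\tau_2^{-1}\circ\tau_1:[0,a]\to[0,a]$ is continuously differentiable and satisfies $\tau_{21}(x)<x$ for $x\in(0,a)$. Let $0<\widehat a<a$ and $\sigma<1$ be such that $\tau_{21}'(x)\le\sigma$ for $x\in[0,\widehat a]$. Then the functional equation $$p(x)=p(\tau_{21}(x))\,\tau_{21}'(x)-\left[\tau_{21}'(x)-a\,\tau_1'(x)\right],\qquad x\in[0,\widehat a],$$ has exactly one solution $p\in L^\infty[0,\widehat a]$ (bounded functions on $[0,\widehat a]$). *)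

theory Defs
  imports "HOL-Analysis.Analysis"
begin

text \<open>Solutions of the functional equation on [0, ah]: bounded, Lebesgue measurable
  functions (representatives of elements of L-infinity) satisfying the equation
  at every point of [0, ah].\<close>
definition fe_solution ::
  "real \<Rightarrow> real \<Rightarrow> (real \<Rightarrow> real) \<Rightarrow> (real \<Rightarrow> real) \<Rightarrow> (real \<Rightarrow> real) \<Rightarrow> (real \<Rightarrow> real) \<Rightarrow> bool"
  where "fe_solution a ah t21 d21 d1 p \<longleftrightarrow>
     bounded (p ` {0..ah}) \<and>
     p \<in> borel_measurable (restrict_space lebesgue {0..ah}) \<and>
     (\<forall>x\<in>{0..ah}. p x = p (t21 x) * d21 x - (d21 x - a * d1 x))"

end

theory Submission
  imports Defs
begin

lemma deriv_nonneg_right: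
  fixes f :: "real \<Rightarrow> real"
  assumes der: "(f has_real_derivative D) (at x within {x..b})" and xb: "x < b"
    and mono: "\<And>y. y \<in> {x..b} \<Longrightarrow> f x \<le> f y"
  shows "0 \<le> D"
proof -
  have lim: "((\<lambda>y. (f y - f x) / (y - x)) \<longlongrightarrow> D) (at_right x)"
    using der xb by (simp add: has_field_derivative_iff at_within_Icc_at_right)
  show ?thesis
  proof (rule tendsto_lowerbound[OF lim])
    show "\<forall>\<^sub>F y in at_right x. 0 \<le> (f y - f x) / (y - x)"
      unfolding eventually_at_right_field
      using xb mono by (intro exI[of _ b]) auto
  qed simp
qed

theorem proposition2:
  fixes a ah \<sigma> :: real and t1 t2 d1 d2 d21 :: "real \<Rightarrow> real"
  defines "t21 \<equiv> (\<lambda>x. the_inv_into {0..a} t2 (t1 x))"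
  assumes "0 < a" "a < 1"
    and "\<forall>x\<in>{0..a}. t1 x \<in> {0..1}" "\<forall>x\<in>{0..a}. t2 x \<in> {0..1}"
    and "\<forall>x\<in>{0..a}. (t1 has_real_derivative d1 x) (at x within {0..a})" "continuous_on {0..a} d1"
    and "\<forall>x\<in>{0..a}. (t2 has_real_derivative d2 x) (at x within {0..a})" "continuous_on {0..a} d2"
    and "strict_mono_on {0..a} t1" "strict_mono_on {0..a} t2"
    and "t1 0 = 0" "t1 a = 1" "t2 0 = 0" "t2 a = 1"
    and "\<forall>x\<in>{0..a}. t1 x \<le> x / a" "\<forall>x\<in>{0..a}. t2 x \<ge> x / a"
    and "\<forall>x\<in>{0..a}. (t21 has_real_derivative d21 x) (at x within {0..a})" "continuous_on {0..a} d21"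
    and "\<forall>x\<in>{0<..<a}. t21 x < x"
    and "0 < ah" "ah < a" "\<sigma> < 1" "\<forall>x\<in>{0..ah}. d21 x \<le> \<sigma>"
  shows "\<exists>p. fe_solution a ah t21 d21 d1 p \<and>
           (\<forall>q. fe_solution a ah t21 d21 d1 q \<longrightarrow> (\<forall>x\<in>{0..ah}. q x = p x))"
proof -
  note A = assms(2-)
  define S where "S = {0..ah}"
  have SA: "S \<subseteq> {0..a}" using A by (auto simp: S_def)
  have t2c: "continuous_on {0..a} t2"
    using A(7) by (metis DERIV_continuous continuous_on_eq_continuous_within)
  have t2inj: "inj_on t2 {0..a}" using A(10) strict_mono_on_imp_inj_on by blast
  have img: "\<And>y. y \<in> {0..1} \<Longrightarrow> y \<in> t2 ` {0..a}"
  proof -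
    fix y :: real assume "y \<in> {0..1}"
    then obtain z where "0 \<le> z" "z \<le> a" "t2 z = y"
      using IVT'[of t2 0 y a] t2c A by auto
    then show "y \<in> t2 ` {0..a}" by auto
  qed
  have t21a: "\<And>x. x \<in> {0..a} \<Longrightarrow> t21 x \<in> {0..a}"
    unfolding t21_def using the_inv_into_into[OF t2inj] img A(3) by blast
  have t21inv: "\<And>x. x \<in> {0..a} \<Longrightarrow> t2 (t21 x) = t1 x"
    unfolding t21_def using f_the_inv_into_f[OF t2inj] img A(3) by blast
  have t210: "t21 0 = 0"
    unfolding t21_def using the_inv_into_f_eq[OF t2inj, of 0 0] A by auto
  have t21S: "\<And>x. x \<in> S \<Longrightarrow> t21 x \<in> S"
  proof -
    fix x assume x: "x \<in> S"
    show "t21 x \<in> S"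
    proof (cases "x = 0")
      case True then show ?thesis using t210 x by simp
    next
      case False
      then have "t21 x < x" using A(19) x A by (auto simp: S_def)
      then show ?thesis using t21a[of x] x SA by (auto simp: S_def)
    qed
  qed
  have t21mono: "\<And>x y. x \<in> {0..a} \<Longrightarrow> y \<in> {0..a} \<Longrightarrow> x \<le> y \<Longrightarrow> t21 x \<le> t21 y"
  proof (rule ccontr)
    fix x y assume xy: "x \<in> {0..a}" "y \<in> {0..a}" "x \<le> y" "\<not> t21 x \<le> t21 y"
    then have "t2 (t21 y) < t2 (t21 x)"
      using strict_mono_onD[OF A(10)] t21a by simp
    moreover have "t1 x \<le> t1 y" using strict_mono_on_leD[OF A(9)] xy by auto
    ultimately show False using t21inv xy by simp
  qed
  have t21c: "continuous_on S t21"
    using A(17) SA by (metis DERIV_continuous continuous_on_eq_continuous_within continuous_on_subset)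
  have d21nn: "\<And>x. x \<in> S \<Longrightarrow> 0 \<le> d21 x"
  proof -
    fix x assume x: "x \<in> S"
    have "(t21 has_real_derivative d21 x) (at x within {x..a})"
    proof (rule has_field_derivative_subset)
      show "(t21 has_real_derivative d21 x) (at x within {0..a})" using A(17) x SA by auto
      show "{x..a} \<subseteq> {0..a}" using x by (auto simp: S_def)
    qed
    then show "0 \<le> d21 x"
      by (rule deriv_nonneg_right) (use x A SA t21mono in \<open>auto simp: S_def\<close>)
  qed
  have d21le: "\<And>x. x \<in> S \<Longrightarrow> d21 x \<le> \<sigma>" using A by (simp add: S_def)
  have S0: "0 \<in> S" using A by (auto simp: S_def)
  have s0: "0 \<le> \<sigma>" using d21nn[OF S0] d21le[OF S0] by linarith
  define g where "g x = d21 x - a * d1 x" for x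
  have gc: "continuous_on S g"
    unfolding g_def using A(6) A(18) SA
    by (intro continuous_intros) (auto intro: continuous_on_subset)
  obtain G where G: "\<And>x. x \<in> S \<Longrightarrow> \<bar>g x\<bar> \<le> G"
  proof -
    have "compact (g ` S)" using gc by (intro compact_continuous_image) (auto simp: S_def)
    then have "bounded (g ` S)" by (rule compact_imp_bounded)
    then show ?thesis using that unfolding bounded_real by auto
  qed
  have G0: "0 \<le> G" using G[OF S0] by linarith
  define T where "T n = t21 ^^ n" for n
  have TS: "\<And>n x. x \<in> S \<Longrightarrow> T n x \<in> S"
  proof -
    fix n x assume "x \<in> S" then show "T n x \<in> S"
      by (induction n) (auto simp: T_def t21S)
  qed
  have Tc: "\<And>n. continuous_on S (T n)"
  proof -
    fix n show "continuous_on S (T n)"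
    proof (induction n)
      case 0 then show ?case by (simp add: T_def)
    next
      case (Suc n)
      have "T (Suc n) = t21 \<circ> T n" by (simp add: T_def)
      moreover have "continuous_on S (t21 \<circ> T n)"
        by (rule continuous_on_compose[OF Suc]) (use t21c TS in \<open>auto intro: continuous_on_subset\<close>)
      ultimately show ?case by simp
    qed
  qed
  have TSuc: "\<And>n x. T n (t21 x) = T (Suc n) x"
    by (simp add: T_def funpow_swap1)
  define D where "D n x = (\<Prod>k<n. d21 (T k x))" for n x
  have Dbd: "\<And>n x. x \<in> S \<Longrightarrow> 0 \<le> D n x \<and> D n x \<le> \<sigma> ^ n"
  proof -
    fix n x assume x: "x \<in> S"
    show "0 \<le> D n x \<and> D n x \<le> \<sigma> ^ n"
    proof (induction n)
      case 0 then show ?case by (simp add: D_def)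
    next
      case (Suc n)
      have e: "D (Suc n) x = D n x * d21 (T n x)" by (simp add: D_def)
      have "D n x * d21 (T n x) \<le> \<sigma> ^ n * \<sigma>"
        using Suc d21nn[OF TS[OF x]] d21le[OF TS[OF x]] by (intro mult_mono) auto
      then show ?case using e Suc d21nn[OF TS[OF x]] by (simp add: mult.commute)
    qed
  qed
  have Dshift: "\<And>n x. D n (t21 x) * d21 x = D (Suc n) x"
  proof -
    fix n x
    have "D (Suc n) x = d21 (T 0 x) * (\<Prod>k<n. d21 (T (Suc k) x))"
      unfolding D_def by (rule prod.lessThan_Suc_shift)
    moreover have "T 0 x = x" by (simp add: T_def)
    moreover have "D n (t21 x) = (\<Prod>k<n. d21 (T (Suc k) x))"
      unfolding D_def TSuc by simp
    ultimately show "D n (t21 x) * d21 x = D (Suc n) x" by (simp add: mult.commute)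
  qed
  define f where "f n x = g (T n x) * D n x" for n x
  have fbd: "\<And>n x. x \<in> S \<Longrightarrow> \<bar>f n x\<bar> \<le> G * \<sigma> ^ n"
    unfolding f_def abs_mult using G TS Dbd G0 by (auto intro!: mult_mono)
  have geo: "summable (\<lambda>n. G * \<sigma> ^ n)"
    using s0 A by (intro summable_mult summable_geometric) auto
  have fsum: "\<And>x. x \<in> S \<Longrightarrow> summable (\<lambda>n. f n x)"
    using fbd geo by (metis (no_types, lifting) real_norm_def summable_comparison_test')
  have fabs: "\<And>x. x \<in> S \<Longrightarrow> summable (\<lambda>n. \<bar>f n x\<bar>)"
    using fbd geo by (metis (no_types, lifting) abs_abs real_norm_def summable_comparison_test')
  define p where "p x = - (\<Sum>n. f n x)" for x
  have pbd: "\<And>x. x \<in> S \<Longrightarrow> \<bar>p x\<bar> \<le> (\<Sum>n. G * \<sigma> ^ n)"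
  proof -
    fix x assume x: "x \<in> S"
    have "\<bar>p x\<bar> \<le> (\<Sum>n. \<bar>f n x\<bar>)" unfolding p_def using summable_rabs[OF fabs[OF x]] by simp
    also have "\<dots> \<le> (\<Sum>n. G * \<sigma> ^ n)" using fbd[OF x] fabs[OF x] geo by (intro suminf_le) auto
    finally show "\<bar>p x\<bar> \<le> (\<Sum>n. G * \<sigma> ^ n)" .
  qed
  have peq: "\<And>x. x \<in> S \<Longrightarrow> p x = p (t21 x) * d21 x - (d21 x - a * d1 x)"
  proof -
    fix x assume x: "x \<in> S"
    have "p (t21 x) * d21 x = - ((\<Sum>n. f n (t21 x)) * d21 x)" by (simp add: p_def)
    also have "(\<Sum>n. f n (t21 x)) * d21 x = (\<Sum>n. f n (t21 x) * d21 x)"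
      by (rule suminf_mult2[OF fsum[OF t21S[OF x]]])
    also have "(\<lambda>n. f n (t21 x) * d21 x) = (\<lambda>n. f (Suc n) x)"
      by (rule ext) (simp add: f_def TSuc mult.assoc Dshift)
    also have "(\<Sum>n. f (Suc n) x) = (\<Sum>n. f n x) - f 0 x"
      by (rule suminf_split_head[OF fsum[OF x]])
    finally show "p x = p (t21 x) * d21 x - (d21 x - a * d1 x)"
      by (simp add: p_def f_def D_def T_def g_def)
  qed
  have fmeas: "\<And>n. f n \<in> borel_measurable (lebesgue_on S)"
  proof -
    fix n
    have "continuous_on S (f n)" unfolding f_def D_def
      using Tc gc TS d21nn A(18) SA
      by (intro continuous_intros continuous_on_compose2[OF gc Tc]
            continuous_on_compose2[OF continuous_on_subset[OF A(18) SA] Tc]) auto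
    then show "f n \<in> borel_measurable (lebesgue_on S)"
      by (rule continuous_imp_measurable_on_sets_lebesgue) (simp add: S_def)
  qed
  have pmeas: "p \<in> borel_measurable (lebesgue_on S)"
    unfolding p_def using fmeas by measurable
  have psol: "fe_solution a ah t21 d21 d1 p"
    unfolding fe_solution_def
  proof (intro conjI ballI)
    show "bounded (p ` {0..ah})" unfolding bounded_real using pbd S_def by (intro exI[of _ "\<Sum>n. G * \<sigma> ^ n"]) auto
    show "p \<in> borel_measurable (restrict_space lebesgue {0..ah})" using pmeas S_def by simp
    fix x assume "x \<in> {0..ah}" then show "p x = p (t21 x) * d21 x - (d21 x - a * d1 x)"
      using peq S_def by simp
  qed
  have uniq: "\<forall>x\<in>{0..ah}. q x = p x" if q: "fe_solution a ah t21 d21 d1 q" for q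
  proof -
    define r where "r x = q x - p x" for x
    have "bounded (q ` {0..ah})" using q unfolding fe_solution_def by blast
    then obtain Mq where Mq': "\<forall>y\<in>q ` {0..ah}. \<bar>y\<bar> \<le> Mq" unfolding bounded_real by blast
    have Mq: "\<And>x. x \<in> S \<Longrightarrow> \<bar>q x\<bar> \<le> Mq" using Mq' by (auto simp: S_def)
    have "bounded (p ` {0..ah})" using psol unfolding fe_solution_def by blast
    then obtain Mp where Mp': "\<forall>y\<in>p ` {0..ah}. \<bar>y\<bar> \<le> Mp" unfolding bounded_real by blast
    have Mp: "\<And>x. x \<in> S \<Longrightarrow> \<bar>p x\<bar> \<le> Mp" using Mp' by (auto simp: S_def)
    define M where "M = Mq + Mp"
    have rM: "\<And>x. x \<in> S \<Longrightarrow> \<bar>r x\<bar> \<le> M"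
      unfolding r_def M_def using Mq Mp by (smt (verit))
    have req: "\<And>x. x \<in> S \<Longrightarrow> r x = r (t21 x) * d21 x"
    proof -
      fix x assume x: "x \<in> S"
      have "q x = q (t21 x) * d21 x - (d21 x - a * d1 x)" "p x = p (t21 x) * d21 x - (d21 x - a * d1 x)"
        using q psol x unfolding fe_solution_def S_def by blast+
      then show "r x = r (t21 x) * d21 x" unfolding r_def by (simp add: algebra_simps)
    qed
    have rbd: "\<And>n x. x \<in> S \<Longrightarrow> \<bar>r x\<bar> \<le> \<sigma> ^ n * M"
    proof -
      fix n show "\<And>x. x \<in> S \<Longrightarrow> \<bar>r x\<bar> \<le> \<sigma> ^ n * M"
      proof (induction n)
        case 0 then show ?case using rM by simp
      next
        case (Suc n)
        have "\<bar>r x\<bar> = \<bar>r (t21 x)\<bar> * d21 x"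
          using req[OF Suc.prems] d21nn[OF Suc.prems] by (simp add: abs_mult)
        also have "\<dots> \<le> (\<sigma> ^ n * M) * \<sigma>"
          using Suc.IH[OF t21S[OF Suc.prems]] d21nn[OF Suc.prems] d21le[OF Suc.prems] s0
          by (intro mult_mono) (auto intro: order_trans[OF abs_ge_zero])
        finally show ?case by (simp add: mult.commute mult.left_commute)
      qed
    qed
    have lim: "(\<lambda>n. \<sigma> ^ n * M) \<longlonglongrightarrow> 0"
      using s0 A by (intro tendsto_mult_left_zero LIMSEQ_power_zero) auto
    show ?thesis
    proof
      fix x assume x: "x \<in> {0..ah}"
      have "\<bar>r x\<bar> \<le> 0"
        by (rule LIMSEQ_le_const[OF lim]) (use rbd x S_def in auto)
      then show "q x = p x" by (simp add: r_def)
    qed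
  qed
  show ?thesis using psol uniq by blast
qed

end
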